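(* Let $(I,T)$ be a transition system with transition relation given as a finite set of top-level conjuncts $T=\{T_1,\dots,T_n\}$, and let $P$ be a safety property with $(I,T)\vdash P$. Consider the following procedure: set $S\leftarrow T$; then for each conjunct $x$ of $T$ in turn (in some order), if $(I,S\setminus\{x\})\vdash P$ then set $S\leftarrow S\setminus\{x\}$; finally return $S$. Then the returned set is a minimal inductive validity core for $(I,T)\vdash P$.
   Context: A transition system $(I,T)$ over a state space $\Sigma$ consists of an initial-state predicate $I:\Sigma\to\mathit{bool}$ and a transition predicate $T:\Sigma\times\Sigma\to\mathit{bool}$. The reachable-state predicate $R$ of $(I,T)$ is the smallest predicate with $\forall s.\, I(s)\Rightarrow R(s)$ and $\forall s,s'.\, R(s)\land T(s,s')\Rightarrow R(s')$. A safety property is a predicate $P:\Sigma\to\mathit{bool}$; we write $(I,T)\vdash P$ if $\forall s.\,R(s)\Rightarrow P(s)$. The transition relation is assumed to be a top-level conjunction $T_1\land\cdots\land T_n$, and $T$ is identified with the set of its top-level conjuncts; for $S\subseteq T$, $S$ also denotes the transition relation given by the conjunction of its elements, and $S\setminus\{x\}$ is $S$ with the conjunct $x$ removed. Given $(I,T)\vdash P$, a set $S\subseteq T$ is an inductive validity core (IVC) for $(I,T)\vdash P$ iff $(I,S)\vdash P$; an IVC $S$ is minimal iff there is no IVC $M$ for $(I,T)\vdash P$ with $M\subsetneq S$. The checks $(I,S\setminus\{x\})\vdash P$ are performed by an exact oracle (the procedure is considered as a mathematical function of its input). *)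

theory Defs
  imports Main
begin

definition conj_rel :: "('s \<Rightarrow> 's \<Rightarrow> bool) set \<Rightarrow> 's \<Rightarrow> 's \<Rightarrow> bool" where
  "conj_rel S = (\<lambda>s s'. \<forall>t\<in>S. t s s')"

inductive reach :: "('s \<Rightarrow> bool) \<Rightarrow> ('s \<Rightarrow> 's \<Rightarrow> bool) \<Rightarrow> 's \<Rightarrow> bool"
  for I :: "'s \<Rightarrow> bool" and T :: "'s \<Rightarrow> 's \<Rightarrow> bool" where
  init: "I s \<Longrightarrow> reach I T s"
| step: "reach I T s \<Longrightarrow> T s s' \<Longrightarrow> reach I T s'"

definition proves :: "('s \<Rightarrow> bool) \<Rightarrow> ('s \<Rightarrow> 's \<Rightarrow> bool) \<Rightarrow> ('s \<Rightarrow> bool) \<Rightarrow> bool" where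
  "proves I T P = (\<forall>s. reach I T s \<longrightarrow> P s)"

definition is_ivc ::
  "('s \<Rightarrow> bool) \<Rightarrow> ('s \<Rightarrow> 's \<Rightarrow> bool) set \<Rightarrow> ('s \<Rightarrow> bool) \<Rightarrow> ('s \<Rightarrow> 's \<Rightarrow> bool) set \<Rightarrow> bool" where
  "is_ivc I T P S = (S \<subseteq> T \<and> proves I (conj_rel S) P)"

definition is_minimal_ivc ::
  "('s \<Rightarrow> bool) \<Rightarrow> ('s \<Rightarrow> 's \<Rightarrow> bool) set \<Rightarrow> ('s \<Rightarrow> bool) \<Rightarrow> ('s \<Rightarrow> 's \<Rightarrow> bool) set \<Rightarrow> bool" where
  "is_minimal_ivc I T P S = (is_ivc I T P S \<and> \<not> (\<exists>M. is_ivc I T P M \<and> M \<subset> S))"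

definition ivc_step ::
  "('s \<Rightarrow> bool) \<Rightarrow> ('s \<Rightarrow> bool) \<Rightarrow> ('s \<Rightarrow> 's \<Rightarrow> bool) set \<Rightarrow> ('s \<Rightarrow> 's \<Rightarrow> bool) \<Rightarrow> ('s \<Rightarrow> 's \<Rightarrow> bool) set" where
  "ivc_step I P S x = (if proves I (conj_rel (S - {x})) P then S - {x} else S)"

definition ivc_proc ::
  "('s \<Rightarrow> bool) \<Rightarrow> ('s \<Rightarrow> 's \<Rightarrow> bool) set \<Rightarrow> ('s \<Rightarrow> bool) \<Rightarrow> ('s \<Rightarrow> 's \<Rightarrow> bool) list \<Rightarrow> ('s \<Rightarrow> 's \<Rightarrow> bool) set" where
  "ivc_proc I T P xs = foldl (ivc_step I P) T xs"

end

theory Submission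
  imports Defs
begin

lemma reach_mono:
  assumes "reach I (conj_rel B) s" "A \<subseteq> B"
  shows "reach I (conj_rel A) s"
  using assms
proof (induction rule: reach.induct)
  case (init s) then show ?case by (simp add: reach.init)
next
  case (step s s')
  then have "conj_rel A s s'" unfolding conj_rel_def by blast
  with step show ?case by (simp add: reach.step)
qed

lemma proves_mono:
  "A \<subseteq> B \<Longrightarrow> proves I (conj_rel A) P \<Longrightarrow> proves I (conj_rel B) P"
  unfolding proves_def using reach_mono by metis

lemma fold_inv:
  "proves I (conj_rel S) P \<Longrightarrow>
   foldl (ivc_step I P) S xs \<subseteq> S \<and> proves I (conj_rel (foldl (ivc_step I P) S xs)) P \<and>
   (\<forall>x\<in>set xs \<inter> foldl (ivc_step I P) S xs. \<not> proves I (conj_rel (foldl (ivc_step I P) S xs - {x})) P)"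
proof (induction xs arbitrary: S)
  case Nil then show ?case by simp
next
  case (Cons a xs)
  define S' where "S' = ivc_step I P S a"
  have pS': "proves I (conj_rel S') P" and sub: "S' \<subseteq> S"
    using Cons.prems by (auto simp: S'_def ivc_step_def)
  define R where "R = foldl (ivc_step I P) S' xs"
  from Cons.IH[OF pS'] have IH: "R \<subseteq> S'" "proves I (conj_rel R) P"
    "\<forall>x\<in>set xs \<inter> R. \<not> proves I (conj_rel (R - {x})) P" by (auto simp: R_def)
  have "\<not> proves I (conj_rel (R - {a})) P" if "a \<in> R"
  proof
    assume h: "proves I (conj_rel (R - {a})) P"
    have "R - {a} \<subseteq> S - {a}" using IH(1) sub by blast
    then have "proves I (conj_rel (S - {a})) P" using proves_mono h by blast
    then have "S' = S - {a}" by (simp add: S'_def ivc_step_def)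
    then show False using that IH(1) by blast
  qed
  then show ?case using IH sub by (auto simp: R_def S'_def)
qed

theorem lemma2:
  fixes I :: "'s \<Rightarrow> bool" and P :: "'s \<Rightarrow> bool"
    and T :: "('s \<Rightarrow> 's \<Rightarrow> bool) set" and xs :: "('s \<Rightarrow> 's \<Rightarrow> bool) list"
  assumes "finite T"
    and "proves I (conj_rel T) P"
    and "distinct xs" and "set xs = T"
  shows "is_minimal_ivc I T P (ivc_proc I T P xs)"
proof -
  let ?R = "ivc_proc I T P xs"
  from fold_inv[OF assms(2), of xs] assms(4) have
    A: "?R \<subseteq> T" "proves I (conj_rel ?R) P"
       "\<forall>x\<in>?R. \<not> proves I (conj_rel (?R - {x})) P"
    by (auto simp: ivc_proc_def)
  have "\<not> (\<exists>M. is_ivc I T P M \<and> M \<subset> ?R)"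
  proof
    assume "\<exists>M. is_ivc I T P M \<and> M \<subset> ?R"
    then obtain M x where M: "proves I (conj_rel M) P" "M \<subseteq> ?R" "x \<in> ?R" "x \<notin> M"
      by (auto simp: is_ivc_def)
    then have "M \<subseteq> ?R - {x}" by blast
    then have "proves I (conj_rel (?R - {x})) P" using proves_mono M(1) by blast
    then show False using A(3) M(3) by blast
  qed
  then show ?thesis using A by (simp add: is_minimal_ivc_def is_ivc_def)
qed

end
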